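(* Let $k\ge1$ and assume $k=1=\beta$ or $1<\beta<k\wedge2$, and let $\hat v$ be as in the context. Let $(t^1,x^1),\dots,(t^m,x^m)$ be distinct points in $(0,\infty)\times\mathbb{R}^k$. Then the random variables $\hat v_1(t^1,x^1),\dots,\hat v_1(t^m,x^m)$ are linearly independent.
   Context: Let $d\ge1$ and $W=W_1+iW_2$ with $W_1,W_2$ independent $\mathbb{R}^d$-valued space-time Gaussian white noises on $\mathbb{R}^{1+k}$. Let $F(t,x,\tau,\xi)=\frac{e^{-i\xi\cdot x-i\tau t}}{2|\xi|}\Big[\frac{1-e^{it(\tau+|\xi|)}}{\tau+|\xi|}-\frac{1-e^{it(\tau-|\xi|)}}{\tau-|\xi|}\Big]$, $v(t,x)=\int_{\mathbb{R}}\int_{\mathbb{R}^k}F(t,x,\tau,\xi)|\xi|^{-(k-\beta)/2}W(d\tau,d\xi)$ and $\hat v=\mathrm{Re}\,v$ on $\mathbb{R}_+\times\mathbb{R}^k$; $\hat v_1$ is its first component. (This has the law of the mild solution of the system of stochastic wave equations driven by noise white in time with spatial covariance $|x-y|^{-\beta}$, or space-time white noise when $k=1=\beta$, with zero initial conditions.) *)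

theory Defs
  imports "HOL-Analysis.Analysis" "HOL-Probability.Probability"
begin

definition sqint :: "'a measure \<Rightarrow> ('a \<Rightarrow> real) \<Rightarrow> bool" where
  "sqint N f \<longleftrightarrow> f \<in> borel_measurable N \<and> integrable N (\<lambda>x. (f x)^2)"

text \<open>Isonormal Gaussian process (Wiener integral) on L2(N), defined on the
  probability space M: linear (a.s.) and W f is centered Gaussian with variance
  the squared L2 norm of f (stated via the characteristic function, which covers
  the degenerate case).\<close>
definition isonormal :: "'w measure \<Rightarrow> 'a measure \<Rightarrow> (('a \<Rightarrow> real) \<Rightarrow> 'w \<Rightarrow> real) \<Rightarrow> bool" where
  "isonormal M N W \<longleftrightarrow> prob_space M \<and>
     (\<forall>f. sqint N f \<longrightarrow> W f \<in> borel_measurable M \<and>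
        (\<forall>u. char (distr M borel (W f)) u =
              complex_of_real (exp (- (u^2 * (\<integral>x. (f x)^2 \<partial>N)) / 2)))) \<and>
     (\<forall>f g a b. sqint N f \<longrightarrow> sqint N g \<longrightarrow>
        (AE \<omega> in M. W (\<lambda>x. a * f x + b * g x) \<omega> = a * W f \<omega> + b * W g \<omega>))"

definition Fker :: "real \<Rightarrow> real^'k \<Rightarrow> real \<Rightarrow> real^'k \<Rightarrow> complex" where
  "Fker t x \<tau> \<xi> =
     cis (- (\<xi> \<bullet> x) - \<tau> * t) / complex_of_real (2 * norm \<xi>) *
     ((1 - cis (t * (\<tau> + norm \<xi>))) / complex_of_real (\<tau> + norm \<xi>)
      - (1 - cis (t * (\<tau> - norm \<xi>))) / complex_of_real (\<tau> - norm \<xi>))"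

definition Gker :: "real \<Rightarrow> real \<Rightarrow> real^'k \<Rightarrow> real \<Rightarrow> real^'k \<Rightarrow> complex" where
  "Gker \<beta> t x \<tau> \<xi> =
     Fker t x \<tau> \<xi> * complex_of_real (norm \<xi> powr (- (real CARD('k) - \<beta>) / 2))"

text \<open>The noise: a single isonormal process on L2 of ((bool x 'd) x (R x R^k)) with
  counting x Lebesgue measure; index (True, j) is the j-th component of W_1 and
  (False, j) the j-th component of W_2 (this encodes that all 2d scalar white noises
  are independent). Then component j0 of Re v(t,x) is
  Re(int G dW_1^{j0} + i int G dW_2^{j0}) = W_1^{j0}(Re G) - W_2^{j0}(Im G).\<close>
definition vhat :: "(((bool \<times> 'd) \<times> (real \<times> (real^'k)) \<Rightarrow> real) \<Rightarrow> 'w \<Rightarrow> real)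
    \<Rightarrow> 'd \<Rightarrow> real \<Rightarrow> real \<Rightarrow> real^'k \<Rightarrow> 'w \<Rightarrow> real" where
  "vhat W j0 \<beta> t x =
     W (\<lambda>((a, j), (\<tau>, \<xi>)). if j = j0 then
          (if a then Re (Gker \<beta> t x \<tau> \<xi>) else - Im (Gker \<beta> t x \<tau> \<xi>)) else 0)"

end

theory Submission
  imports Defs
begin


lemma cis_minus_1_sq: "(cmod (cis x - 1))^2 = 4 * (sin (x/2))^2"
proof -
  have "(cmod (cis x - 1))^2 = (cos x - 1)^2 + (sin x)^2"
    by (simp add: cmod_def cis.code)
  also have "\<dots> = 2 - 2 * cos x" using sin_cos_squared_add[of x]
    by (simp add: power2_eq_square algebra_simps)
  also have "cos x = 1 - 2 * (sin (x/2))^2" using cos_double_sin[of "x/2"] by simp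
  finally show ?thesis by simp
qed

lemma cis_minus_1_le: "cmod (cis x - 1) \<le> \<bar>x\<bar>"
proof -
  have "\<bar>sin (x/2)\<bar>^2 \<le> \<bar>x/2\<bar>^2"
    using abs_sin_x_le_abs_x[of "x/2"] by (intro power_mono) auto
  hence "(cmod (cis x - 1))^2 \<le> x^2"
    unfolding cis_minus_1_sq by (simp add: power_divide)
  thus ?thesis using real_le_rsqrt by (metis abs_ge_zero norm_ge_zero power2_le_imp_le power2_abs)
qed

lemma cis_minus_1_le2: "cmod (cis x - 1) \<le> 2"
  by (metis norm_cis norm_one norm_triangle_ineq4 one_add_one)

lemma cis_diff_le: "cmod (cis x - cis y) \<le> \<bar>x - y\<bar>"
proof -
  have "cis y * cis (x - y) = cis x" by (simp add: cis_mult)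
  hence "cis x - cis y = cis y * (cis (x - y) - 1)"
    by (simp add: algebra_simps)
  hence "cmod (cis x - cis y) = cmod (cis (x - y) - 1)" by (simp add: norm_mult)
  thus ?thesis using cis_minus_1_le by simp
qed

lemma phi_le1:
  assumes "t \<ge> 0" shows "cmod ((1 - cis (t * a)) / complex_of_real a) \<le> t"
proof (cases "a = 0")
  case False
  have "cmod (1 - cis (t * a)) \<le> t * \<bar>a\<bar>"
    using cis_minus_1_le[of "t*a"] assms by (simp add: norm_minus_commute abs_mult)
  thus ?thesis using False by (simp add: norm_divide divide_le_eq)
qed (use assms in simp)

lemma phi_le2: "cmod ((1 - cis (t * a)) / complex_of_real a) \<le> 2 / \<bar>a\<bar>"
proof (cases "a = 0")
  case False
  have "cmod (1 - cis (t * a)) \<le> 2"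
    using cis_minus_1_le2[of "t*a"] by (simp add: norm_minus_commute)
  thus ?thesis using False by (simp add: norm_divide divide_right_mono)
qed simp

lemma phi_sq:
  assumes "t \<ge> 0" shows "(cmod ((1 - cis (t * a)) / complex_of_real a))^2 \<le> (2*t^2+8) / (1 + a^2)"
proof (cases "\<bar>a\<bar> \<le> 1")
  case True
  have "(cmod ((1 - cis (t * a)) / complex_of_real a))^2 \<le> t^2"
    using phi_le1[OF assms, of a] by (intro power_mono) auto
  also have "t^2 \<le> (2*t^2+8) / (1 + a^2)"
  proof -
    have "a^2 \<le> 1" using True by (metis abs_le_square_iff abs_one one_power2)
    hence "t^2 * a^2 \<le> t^2 * 1" by (intro mult_left_mono) auto
    hence "t^2 * (1 + a^2) \<le> 2*t^2+8" by (simp add: algebra_simps)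
    thus ?thesis by (simp add: le_divide_eq add_pos_nonneg)
  qed
  finally show ?thesis .
next
  case False
  have "(cmod ((1 - cis (t * a)) / complex_of_real a))^2 \<le> (2 / \<bar>a\<bar>)^2"
    using phi_le2[of t a] by (intro power_mono) auto
  also have "\<dots> = 4 / a^2" by (simp add: power_divide)
  also have "\<dots> \<le> (2*t^2+8) / (1 + a^2)"
  proof -
    have "a^2 \<ge> 1" using False by (metis abs_le_square_iff abs_one le_cases one_power2 abs_ge_zero)
    have "0 \<le> a^2 * t^2" by simp
    hence "4 \<le> 4 * a^2 + 2 * (a^2 * t^2)" using \<open>a^2 \<ge> 1\<close> by linarith
    hence "4 * (1 + a^2) \<le> (2*t^2+8) * a^2" by (simp add: algebra_simps)
    thus ?thesis using \<open>a^2 \<ge> 1\<close> by (simp add: divide_le_eq le_divide_eq add_pos_nonneg frac_le_eq)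
  qed
  finally show ?thesis .
qed

lemma cis_has_integral:
  assumes "a \<noteq> 0" "t \<ge> 0"
  shows "((\<lambda>s. cis (s * a)) has_integral (cis (t * a) - 1) / (\<i> * complex_of_real a)) {0..t}"
proof -
  define F where "F = (\<lambda>z::complex. exp (\<i> * complex_of_real a * z) / (\<i> * complex_of_real a))"
  have d: "(F has_field_derivative exp (\<i> * complex_of_real a * z)) (at z)" for z
    unfolding F_def using assms(1)
    by (auto intro!: derivative_eq_intros)
  have e: "cis (s * a) = exp (\<i> * complex_of_real a * complex_of_real s)" for s
    by (simp add: cis_conv_exp mult_ac)
  have "((\<lambda>s. cis (s * a)) has_integral (F (complex_of_real t) - F (complex_of_real 0))) {0..t}"
    unfolding e
    by (rule fundamental_theorem_of_calculus[OF assms(2)])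
       (auto intro!: has_vector_derivative_real_field d)
  moreover have "F (complex_of_real t) - F (complex_of_real 0) = (cis (t * a) - 1) / (\<i> * complex_of_real a)"
    unfolding F_def by (simp add: e[symmetric] diff_divide_distrib)
  ultimately show ?thesis by simp
qed

lemma phi_lip:
  assumes "a \<noteq> 0" "b \<noteq> 0" "t \<ge> 0"
  shows "cmod ((1 - cis (t * a)) / complex_of_real a - (1 - cis (t * b)) / complex_of_real b) \<le> t^2 * \<bar>a - b\<bar>"
proof -
  have I: "((\<lambda>s. cis (s * a) - cis (s * b)) has_integral
      ((cis (t * a) - 1) / (\<i> * complex_of_real a) - (cis (t * b) - 1) / (\<i> * complex_of_real b))) {0..t}"
    by (intro has_integral_diff cis_has_integral assms)
  have bnd: "\<forall>x\<in>{0..t}. cmod (cis (x * a) - cis (x * b)) \<le> t * \<bar>a - b\<bar>"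
  proof
    fix x assume x: "x \<in> {0..t}"
    have "cmod (cis (x * a) - cis (x * b)) \<le> \<bar>x * a - x * b\<bar>" by (rule cis_diff_le)
    also have "\<dots> = x * \<bar>a - b\<bar>" using x by (simp add: abs_mult right_diff_distrib[symmetric])
    also have "\<dots> \<le> t * \<bar>a - b\<bar>" using x by (intro mult_right_mono) auto
    finally show "cmod (cis (x * a) - cis (x * b)) \<le> t * \<bar>a - b\<bar>" .
  qed
  have "0 \<le> t * \<bar>a - b\<bar>" using assms by simp
  from has_integral_bound[OF this I[unfolded cbox_interval[symmetric]]] bnd assms
  have *: "cmod ((cis (t * a) - 1) / (\<i> * complex_of_real a) - (cis (t * b) - 1) / (\<i> * complex_of_real b))
      \<le> t^2 * \<bar>a - b\<bar>" by (simp add: power2_eq_square mult_ac)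
  have "(1 - cis (t * a)) / complex_of_real a - (1 - cis (t * b)) / complex_of_real b
     = - \<i> * ((cis (t * a) - 1) / (\<i> * complex_of_real a) - (cis (t * b) - 1) / (\<i> * complex_of_real b))"
    using assms by (simp add: field_simps)
  hence "cmod ((1 - cis (t * a)) / complex_of_real a - (1 - cis (t * b)) / complex_of_real b)
     = cmod ((cis (t * a) - 1) / (\<i> * complex_of_real a) - (cis (t * b) - 1) / (\<i> * complex_of_real b))"
    by (simp add: norm_mult)
  with * show ?thesis by simp
qed



definition phi :: "real \<Rightarrow> real \<Rightarrow> complex" where
  "phi t a = (1 - cis (t * a)) / complex_of_real a"

lemma Fker_eq: "Fker t x \<tau> \<xi> = cis (- (\<xi> \<bullet> x) - \<tau> * t) / complex_of_real (2 * norm \<xi>) *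
     (phi t (\<tau> + norm \<xi>) - phi t (\<tau> - norm \<xi>))"
  unfolding Fker_def phi_def ..

lemma Fker_norm: "cmod (Fker t x \<tau> \<xi>) = cmod (phi t (\<tau> + norm \<xi>) - phi t (\<tau> - norm \<xi>)) / (2 * norm \<xi>)"
  unfolding Fker_eq by (simp add: norm_mult norm_divide)

lemma B_identity:
  assumes "\<tau> + r \<noteq> 0" "\<tau> - r \<noteq> 0"
  shows "(phi t (\<tau> + r) - phi t (\<tau> - r)) * complex_of_real ((\<tau> + r) * (\<tau> - r)) =
     - complex_of_real (2*r) - cis (t*\<tau>) * (complex_of_real \<tau> * (cis (t*r) - cis (-(t*r)))
        - complex_of_real r * (cis (t*r) + cis (-(t*r))))"
proof -
  have c1: "cis (t * (\<tau> + r)) = cis (t*\<tau>) * cis (t*r)" by (simp add: cis_mult distrib_left)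
  have c2: "cis (t * (\<tau> - r)) = cis (t*\<tau>) * cis (-(t*r))" by (simp add: cis_mult right_diff_distrib)
  have a: "complex_of_real (\<tau> + r) \<noteq> 0" "complex_of_real (\<tau> - r) \<noteq> 0"
    using assms by (metis of_real_eq_0_iff)+
  have aux: "\<And>a b p q::complex. a \<noteq> 0 \<Longrightarrow> b \<noteq> 0 \<Longrightarrow> ((1-p)/a - (1-q)/b) * (a*b) = (1-p)*b - (1-q)*a"
    by (simp add: field_simps)
  have "(phi t (\<tau> + r) - phi t (\<tau> - r)) * complex_of_real ((\<tau> + r) * (\<tau> - r))
      = (1 - cis (t * (\<tau> + r))) * complex_of_real (\<tau> - r) - (1 - cis (t * (\<tau> - r))) * complex_of_real (\<tau> + r)"
    unfolding phi_def of_real_mult[of "\<tau>+r" "\<tau>-r"] by (rule aux[OF a])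
  also have "\<dots> = - complex_of_real (2*r) - cis (t*\<tau>) * (complex_of_real \<tau> * (cis (t*r) - cis (-(t*r)))
        - complex_of_real r * (cis (t*r) + cis (-(t*r))))"
    unfolding c1 c2 by (simp add: algebra_simps)
  finally show ?thesis .
qed

lemma B_bound_identity:
  assumes "\<tau> + r \<noteq> 0" "\<tau> - r \<noteq> 0" "r \<ge> 0" "t \<ge> 0"
  shows "cmod (phi t (\<tau> + r) - phi t (\<tau> - r)) * \<bar>(\<tau> + r) * (\<tau> - r)\<bar> \<le> 4*r + 2*\<bar>\<tau>\<bar>*t*r"
proof -
  have "cmod (phi t (\<tau> + r) - phi t (\<tau> - r)) * \<bar>(\<tau> + r) * (\<tau> - r)\<bar>
     = cmod ((phi t (\<tau> + r) - phi t (\<tau> - r)) * complex_of_real ((\<tau> + r) * (\<tau> - r)))"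
    by (simp only: norm_mult norm_of_real)
  also have "\<dots> = cmod (- complex_of_real (2*r) - cis (t*\<tau>) * (complex_of_real \<tau> * (cis (t*r) - cis (-(t*r)))
        - complex_of_real r * (cis (t*r) + cis (-(t*r)))))"
    using B_identity[OF assms(1,2)] by simp
  also have "\<dots> \<le> cmod (complex_of_real (2*r)) + cmod (cis (t*\<tau>) * (complex_of_real \<tau> * (cis (t*r) - cis (-(t*r)))
        - complex_of_real r * (cis (t*r) + cis (-(t*r)))))"
    by (metis norm_minus_cancel norm_triangle_ineq4)
  also have "cmod (cis (t*\<tau>) * (complex_of_real \<tau> * (cis (t*r) - cis (-(t*r)))
        - complex_of_real r * (cis (t*r) + cis (-(t*r)))))
      = cmod (complex_of_real \<tau> * (cis (t*r) - cis (-(t*r)))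
        - complex_of_real r * (cis (t*r) + cis (-(t*r))))" by (simp add: norm_mult)
  also have "\<dots> \<le> cmod (complex_of_real \<tau> * (cis (t*r) - cis (-(t*r)))) + cmod (complex_of_real r * (cis (t*r) + cis (-(t*r))))"
    by (rule norm_triangle_ineq4)
  also have "cmod (complex_of_real \<tau> * (cis (t*r) - cis (-(t*r)))) \<le> \<bar>\<tau>\<bar> * (2*t*r)"
  proof -
    have "cmod (cis (t*r) - cis (-(t*r))) \<le> \<bar>t*r - (-(t*r))\<bar>" by (rule cis_diff_le)
    also have "\<dots> = 2*t*r" using assms by simp
    finally show ?thesis by (simp add: norm_mult mult_left_mono)
  qed
  also have "cmod (complex_of_real r * (cis (t*r) + cis (-(t*r)))) \<le> r * 2"
  proof -
    have "cmod (cis (t*r) + cis (-(t*r))) \<le> 2"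
      by (metis norm_cis norm_triangle_ineq one_add_one)
    thus ?thesis using assms by (simp add: norm_mult mult_left_mono)
  qed
  finally show ?thesis using assms by (simp add: algebra_simps)
qed

lemma F_bound_a:
  assumes "t \<ge> 0" "\<xi> \<noteq> 0"
  shows "(cmod (Fker t x \<tau> \<xi>))^2 \<le> (t^2+4) / (norm \<xi>)^2 *
           (1 / (1 + (\<tau> + norm \<xi>)^2) + 1 / (1 + (\<tau> - norm \<xi>)^2))"
proof -
  define r where "r = norm \<xi>"
  have r: "r > 0" using assms unfolding r_def by simp
  define pu where "pu = cmod (phi t (\<tau> + r))"
  define pv where "pv = cmod (phi t (\<tau> - r))"
  have u: "pu^2 \<le> (2*t^2+8) / (1 + (\<tau>+r)^2)" unfolding pu_def phi_def by (rule phi_sq[OF assms(1)])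
  have v: "pv^2 \<le> (2*t^2+8) / (1 + (\<tau>-r)^2)" unfolding pv_def phi_def by (rule phi_sq[OF assms(1)])
  have "cmod (phi t (\<tau> + r) - phi t (\<tau> - r)) \<le> pu + pv" unfolding pu_def pv_def by (rule norm_triangle_ineq4)
  hence "(cmod (phi t (\<tau> + r) - phi t (\<tau> - r)))^2 \<le> (pu+pv)^2" by (intro power_mono) auto
  also have "\<dots> \<le> 2*pu^2 + 2*pv^2" by (smt (verit, best) sum_squares_bound power2_sum)
  also have "\<dots> \<le> 2*((2*t^2+8) / (1 + (\<tau>+r)^2)) + 2*((2*t^2+8) / (1 + (\<tau>-r)^2))" using u v by linarith
  finally have B: "(cmod (phi t (\<tau> + r) - phi t (\<tau> - r)))^2 \<le> 4 * ((t^2+4) * (1 / (1 + (\<tau>+r)^2) + 1 / (1 + (\<tau>-r)^2)))"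
    by (simp add: algebra_simps add_divide_distrib)
  have "(cmod (Fker t x \<tau> \<xi>))^2 = (cmod (phi t (\<tau> + r) - phi t (\<tau> - r)))^2 / (4 * r^2)"
    unfolding Fker_norm r_def by (simp add: power_divide power_mult_distrib)
  also have "\<dots> \<le> 4 * ((t^2+4) * (1 / (1 + (\<tau>+r)^2) + 1 / (1 + (\<tau>-r)^2))) / (4 * r^2)"
    using B r by (intro divide_right_mono) auto
  finally show ?thesis unfolding r_def by simp
qed



lemma F_bound_b:
  assumes t: "t \<ge> 0" and xi: "\<xi> \<noteq> 0" "norm \<xi> \<le> 1" and tau: "\<tau> \<noteq> norm \<xi>" "\<tau> \<noteq> - norm \<xi>"
  shows "(cmod (Fker t x \<tau> \<xi>))^2 \<le> (5*t^4 + 4*(1+t)^2) / (1 + \<tau>^2)"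
proof -
  define r where "r = norm \<xi>"
  have r: "r > 0" "r \<le> 1" using xi unfolding r_def by auto
  have a: "\<tau> + r \<noteq> 0" "\<tau> - r \<noteq> 0" using tau unfolding r_def by auto
  define B where "B = cmod (phi t (\<tau> + r) - phi t (\<tau> - r))"
  have F: "cmod (Fker t x \<tau> \<xi>) = B / (2*r)" unfolding Fker_norm B_def r_def ..
  have Bl: "B \<le> t^2 * (2*r)"
    using phi_lip[OF a t] r unfolding B_def phi_def by simp
  have Fl: "cmod (Fker t x \<tau> \<xi>) \<le> t^2" unfolding F using Bl r by (simp add: divide_le_eq mult_ac)
  have pos: "0 \<le> 5*t^4" "0 \<le> 4*(1+t)^2" using t by simp_all
  show ?thesis
  proof (cases "\<bar>\<tau>\<bar> < 2")
    case True
    have "(cmod (Fker t x \<tau> \<xi>))^2 \<le> (t^2)^2" using Fl by (intro power_mono) auto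
    also have "\<dots> = t^4" by simp
    also have "\<dots> \<le> 5*t^4 / (1 + \<tau>^2)"
    proof -
      have "\<bar>\<tau>\<bar> * \<bar>\<tau>\<bar> \<le> 2 * 2" using True by (intro mult_mono) auto
      hence "\<tau>^2 \<le> 4" by (simp add: power2_eq_square abs_mult_self)
      hence "t^4 * (1 + \<tau>^2) \<le> t^4 * 5" by (intro mult_left_mono) auto
      thus ?thesis by (simp add: le_divide_eq add_pos_nonneg)
    qed
    also have "\<dots> \<le> (5*t^4 + 4*(1+t)^2) / (1 + \<tau>^2)" using pos
      by (intro divide_right_mono) (auto intro: add_pos_nonneg)
    finally show ?thesis .
  next
    case False
    hence ta: "\<bar>\<tau>\<bar> \<ge> 2" by simp
    have "2 * 2 \<le> \<bar>\<tau>\<bar> * \<bar>\<tau>\<bar>" using ta by (intro mult_mono) auto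
    hence sq: "\<tau>^2 \<ge> 4" by (simp add: power2_eq_square abs_mult_self)
    have r2: "r^2 \<le> 1" using r by (simp add: power_le_one)
    have den: "\<bar>(\<tau> + r) * (\<tau> - r)\<bar> \<ge> 3/4 * \<tau>^2"
    proof -
      have "(\<tau> + r) * (\<tau> - r) = \<tau>^2 - r^2" by (simp add: power2_eq_square algebra_simps)
      moreover have "\<tau>^2 - r^2 \<ge> 3/4 * \<tau>^2" using sq r2 by linarith
      ultimately show ?thesis by linarith
    qed
    have Bi: "B * \<bar>(\<tau> + r) * (\<tau> - r)\<bar> \<le> 4*r + 2*\<bar>\<tau>\<bar>*t*r"
      unfolding B_def using B_bound_identity[OF a] r t by simp
    have B0: "B \<ge> 0" unfolding B_def by simp
    have "B * (3/4 * \<tau>^2) \<le> B * \<bar>(\<tau> + r) * (\<tau> - r)\<bar>" using den B0 by (intro mult_left_mono) auto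
    hence "B * (3/4 * \<tau>^2) \<le> 2*r * (2 + \<bar>\<tau>\<bar>*t)" using Bi by (simp add: algebra_simps)
    also have "2 + \<bar>\<tau>\<bar>*t \<le> \<bar>\<tau>\<bar> * (1 + t)" using ta by (simp add: algebra_simps)
    finally have this_prev: "B * (3/4 * \<tau>^2) \<le> 2*r * (\<bar>\<tau>\<bar> * (1 + t))" using r by (simp add: mult_left_mono)
    have tt: "\<tau>^2 = \<bar>\<tau>\<bar> * \<bar>\<tau>\<bar>" by (simp add: power2_eq_square abs_mult_self)
    from this_prev have "B / (2*r) * (3/4 * \<tau>^2) \<le> \<bar>\<tau>\<bar> * (1 + t)" using r by (simp add: field_simps)
    hence "(cmod (Fker t x \<tau> \<xi>) * (3/4 * \<bar>\<tau>\<bar>)) * \<bar>\<tau>\<bar> \<le> (1 + t) * \<bar>\<tau>\<bar>"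
      unfolding F tt by (simp add: mult_ac)
    hence Fb: "cmod (Fker t x \<tau> \<xi>) * (3/4 * \<bar>\<tau>\<bar>) \<le> 1 + t"
      by (rule mult_right_le_imp_le) (use ta in auto)
    hence "(cmod (Fker t x \<tau> \<xi>) * (3/4 * \<bar>\<tau>\<bar>))^2 \<le> (1+t)^2" by (intro power_mono) auto
    hence "(cmod (Fker t x \<tau> \<xi>))^2 * (9/16 * \<tau>^2) \<le> (1+t)^2"
    proof -
      have "(cmod (Fker t x \<tau> \<xi>) * (3/4 * \<bar>\<tau>\<bar>))^2 = (cmod (Fker t x \<tau> \<xi>))^2 * ((3/4)^2 * \<bar>\<tau>\<bar>^2)"
        by (simp only: power_mult_distrib)
      also have "\<dots> = (cmod (Fker t x \<tau> \<xi>))^2 * (9/16 * \<tau>^2)" by (simp add: power_divide)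
      finally show ?thesis using \<open>(cmod (Fker t x \<tau> \<xi>) * (3/4 * \<bar>\<tau>\<bar>))^2 \<le> (1+t)^2\<close> by simp
    qed
    hence "(cmod (Fker t x \<tau> \<xi>))^2 \<le> (1+t)^2 / (9/16 * \<tau>^2)"
      using sq by (subst pos_le_divide_eq) auto
    also have "\<dots> \<le> 4*(1+t)^2 / (1 + \<tau>^2)"
    proof -
      have "(1+t)^2 * (1 + \<tau>^2) \<le> 4*(1+t)^2 * (9/16 * \<tau>^2)"
      proof -
        have "1 + \<tau>^2 \<le> 4 * (9/16 * \<tau>^2)" using sq by linarith
        from mult_left_mono[OF this, of "(1+t)^2"] show ?thesis by (simp add: mult_ac)
      qed
      moreover have "0 < 9/16 * \<tau>^2" "0 < 1 + \<tau>^2" using sq by auto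
      ultimately show ?thesis by (simp add: frac_le_eq divide_le_0_iff) (simp add: algebra_simps)
    qed
    also have "\<dots> \<le> (5*t^4 + 4*(1+t)^2) / (1 + \<tau>^2)" using pos
      by (intro divide_right_mono) (auto intro: add_pos_nonneg)
    finally show ?thesis .
  qed
qed



lemma measurable_cis_raw[measurable (raw)]:
  "f \<in> borel_measurable M \<Longrightarrow> (\<lambda>x. cis (f x)) \<in> borel_measurable M"
  by (rule borel_measurable_continuous_on[where f=cis]) (auto intro!: continuous_intros)

lemma measurable_of_real_raw[measurable (raw)]:
  "f \<in> borel_measurable M \<Longrightarrow> (\<lambda>x. complex_of_real (f x)) \<in> borel_measurable M"
  by (rule measurable_compose[OF _ borel_measurable_of_real])

lemma Gker_meas2[measurable]: "(\<lambda>p::real \<times> (real^'k). Gker \<beta> t x (fst p) (snd p)) \<in> borel_measurable (borel \<Otimes>\<^sub>M borel)"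
  unfolding Gker_def Fker_def by measurable

lemma Fker_meas2[measurable]: "(\<lambda>p::real \<times> (real^'k). Fker t x (fst p) (snd p)) \<in> borel_measurable (borel \<Otimes>\<^sub>M borel)"
  unfolding Fker_def by measurable

lemma Gker_meas[measurable]: "(\<lambda>p::real \<times> (real^'k). Gker \<beta> t x (fst p) (snd p)) \<in> borel_measurable borel"
  using Gker_meas2 unfolding borel_prod .

lemma Fker_meas[measurable]: "(\<lambda>p::real \<times> (real^'k). Fker t x (fst p) (snd p)) \<in> borel_measurable borel"
  using Fker_meas2 unfolding borel_prod .

definition gfun :: "real \<Rightarrow> real \<Rightarrow> real \<Rightarrow> real" where
  "gfun p q s = (if \<bar>s\<bar> \<le> 1 then (if s = 0 then 1 else \<bar>s\<bar> powr -p) else \<bar>s\<bar> powr -q)"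

lemma gfun_nonneg: "0 \<le> gfun p q s" unfolding gfun_def by auto

lemma gfun_meas[measurable]: "gfun p q \<in> borel_measurable borel"
  unfolding gfun_def by measurable

lemma gfun_int:
  assumes p: "0 \<le> p" "p < 1" and q: "1 < q"
  shows "(\<integral>\<^sup>+s. ennreal (gfun p q s) \<partial>lborel) < \<infinity>"
proof -
  define K where "K = (\<lambda>u::real. ennreal (u powr -p) * indicator {0..1} u + ennreal (u powr -q) * indicator {1..} u)"
  have Km[measurable]: "K \<in> borel_measurable borel" unfolding K_def by measurable
  have I1: "(\<integral>\<^sup>+u. ennreal (u powr -p) * indicator {0..1} u \<partial>lborel) = ennreal (1 powr (-p+1) / (-p+1))"
    by (rule nn_integral_has_integral_lebesgue') (use has_integral_powr_from_0[of "-p" 1] p in auto)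
  have I2: "(\<integral>\<^sup>+u. ennreal (u powr -q) * indicator {1..} u \<partial>lborel) = ennreal (-(1 powr (-q+1)) / (-q+1))"
    by (rule nn_integral_has_integral_lebesgue') (use has_integral_powr_to_inf[of "-q" 1] q in auto)
  have IK: "(\<integral>\<^sup>+u. K u \<partial>lborel) < \<infinity>"
    unfolding K_def by (subst nn_integral_add) (auto simp: I1 I2)
  have refl: "(\<integral>\<^sup>+u. K (-u) \<partial>lborel) = (\<integral>\<^sup>+u. K u \<partial>lborel)"
    using nn_integral_real_affine[OF Km, of "-1" 0] by simp
  have "AE s in lborel. ennreal (gfun p q s) \<le> K s + K (-s)"
    using AE_lborel_singleton[of 0]
  proof eventually_elim
    case (elim s)
    show ?case
    proof (cases "s > 0")
      case True
      have "ennreal (gfun p q s) \<le> K s" unfolding K_def gfun_def using True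
        by (auto simp: indicator_def)
      thus ?thesis by (simp add: add_increasing2)
    next
      case False
      hence s: "s < 0" using elim by simp
      have "ennreal (gfun p q s) \<le> K (-s)" unfolding K_def gfun_def using s
        by (auto simp: indicator_def)
      thus ?thesis by (simp add: add_increasing)
    qed
  qed
  hence "(\<integral>\<^sup>+s. ennreal (gfun p q s) \<partial>lborel) \<le> (\<integral>\<^sup>+s. K s + K (-s) \<partial>lborel)"
    by (rule nn_integral_mono_AE)
  also have "\<dots> = (\<integral>\<^sup>+s. K s \<partial>lborel) + (\<integral>\<^sup>+s. K (-s) \<partial>lborel)"
    by (rule nn_integral_add) auto
  also have "\<dots> < \<infinity>" using IK refl by simp
  finally show ?thesis .
qed



lemma AE_coords_nonzero: "AE \<xi> in (lborel::'a::euclidean_space measure). \<forall>b\<in>Basis. \<xi> \<bullet> b \<noteq> 0"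
proof -
  have "negligible (\<Union>b\<in>Basis. {x::'a. b \<bullet> x = 0})"
    by (intro negligible_Union) (auto intro!: negligible_hyperplane simp: nonzero_Basis)
  hence "(\<Union>b\<in>Basis. {x::'a. b \<bullet> x = 0}) \<in> null_sets lebesgue" by (simp add: negligible_iff_null_sets)
  hence "AE x in lebesgue. x \<notin> (\<Union>b\<in>Basis. {x::'a. b \<bullet> x = 0})" by (rule AE_not_in)
  hence "AE x in completion lborel. \<forall>b\<in>Basis. (x::'a) \<bullet> b \<noteq> 0" by (simp add: inner_commute)
  thus ?thesis by (simp add: AE_completion_iff)
qed

lemma outer_bound:
  fixes \<xi> :: "'a::euclidean_space"
  assumes nz: "\<forall>b\<in>Basis. \<xi> \<bullet> b \<noteq> 0" and a: "a \<ge> 0"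
  defines "n \<equiv> real DIM('a)"
  shows "norm \<xi> powr (-a) * min 1 (1 / (norm \<xi>)^2) \<le> (\<Prod>b\<in>Basis. gfun (a/n) ((a+2)/n) (\<xi> \<bullet> b))"
proof -
  define p where "p = a/n"
  define q where "q = (a+2)/n"
  have n: "n > 0" "n \<ge> 1" unfolding n_def by (simp_all add: DIM_positive)
  have p: "p \<ge> 0" unfolding p_def using a n by simp
  have q: "q > 0" unfolding q_def using a n by simp
  define M where "M = Max ((\<lambda>b. \<bar>\<xi> \<bullet> b\<bar>) ` Basis)"
  have Mge: "\<bar>\<xi> \<bullet> b\<bar> \<le> M" if "b \<in> Basis" for b unfolding M_def using that by (intro Max_ge) auto
  have "M \<in> (\<lambda>b. \<bar>\<xi> \<bullet> b\<bar>) ` Basis" unfolding M_def by (rule Max_in) (auto simp: nonempty_Basis)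
  then obtain b0 where b0: "b0 \<in> Basis" "M = \<bar>\<xi> \<bullet> b0\<bar>" by blast
  have Mpos: "M > 0" using b0 nz by auto
  have Mr: "M \<le> norm \<xi>" using b0 Basis_le_norm by auto
  have r: "norm \<xi> > 0" using Mpos Mr by linarith
  define L where "L = (if M \<le> 1 then M powr -p else M powr -q)"
  have L0: "0 \<le> L" unfolding L_def by simp
  have Lle: "L \<le> gfun p q (\<xi> \<bullet> b)" if b: "b \<in> Basis" for b
  proof -
    define s where "s = \<xi> \<bullet> b"
    have s0: "s \<noteq> 0" using nz b unfolding s_def by auto
    have sM: "\<bar>s\<bar> \<le> M" using Mge[OF b] unfolding s_def .
    have "L \<le> gfun p q s"
    proof (cases "M \<le> 1")
      case True
      hence "\<bar>s\<bar> \<le> 1" using sM by simp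
      hence g: "gfun p q s = \<bar>s\<bar> powr -p" unfolding gfun_def using s0 by simp
      have "M powr -p \<le> \<bar>s\<bar> powr -p" using p s0 sM by (intro powr_mono2') auto
      thus ?thesis unfolding L_def g using True by simp
    next
      case False
      have Lq: "L = M powr -q" unfolding L_def using False by simp
      show ?thesis
      proof (cases "\<bar>s\<bar> \<le> 1")
        case True
        hence g: "gfun p q s = \<bar>s\<bar> powr -p" unfolding gfun_def using s0 by simp
        have "1 powr -p \<le> \<bar>s\<bar> powr -p" using p s0 True by (intro powr_mono2') auto
        moreover have "M powr -q \<le> 1" using powr_mono2'[of "-q" 1 M] False q by simp
        ultimately show ?thesis unfolding Lq g by simp
      next
        case False
        hence g: "gfun p q s = \<bar>s\<bar> powr -q" unfolding gfun_def by simp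
        have "M powr -q \<le> \<bar>s\<bar> powr -q" using q s0 sM by (intro powr_mono2') auto
        thus ?thesis unfolding Lq g by simp
      qed
    qed
    thus ?thesis unfolding s_def .
  qed
  have "L ^ DIM('a) \<le> (\<Prod>b\<in>Basis. gfun p q (\<xi> \<bullet> b))"
    using prod_mono[of Basis "\<lambda>_. L" "\<lambda>b. gfun p q (\<xi> \<bullet> b)"] Lle L0 by simp
  moreover have LD: "L ^ DIM('a) = (if M \<le> 1 then M powr (-a) else M powr (-(a+2)))"
  proof -
    have "\<And>e. (M powr e) ^ DIM('a) = M powr (e * n)"
      unfolding n_def using Mpos by (simp add: powr_realpow[symmetric] powr_powr)
    thus ?thesis unfolding L_def p_def q_def using n by simp
  qed
  moreover have "norm \<xi> powr (-a) * min 1 (1 / (norm \<xi>)^2) \<le> (if M \<le> 1 then M powr (-a) else M powr (-(a+2)))"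
  proof (cases "norm \<xi> \<le> 1")
    case True
    have "1 / (norm \<xi>)^2 \<ge> 1" using True r by (simp add: power_le_one)
    hence mi: "min 1 (1 / (norm \<xi>)^2) = 1" by simp
    have "norm \<xi> powr (-a) \<le> M powr (-a)" using a Mpos Mr by (intro powr_mono2') auto
    thus ?thesis using True Mr mi by simp
  next
    case False
    have "1 / (norm \<xi>)^2 \<le> 1" using False by (simp add: divide_le_eq one_le_power)
    hence mi: "min 1 (1 / (norm \<xi>)^2) = 1 / (norm \<xi>)^2" by simp
    have eq: "norm \<xi> powr (-a) * (1 / (norm \<xi>)^2) = norm \<xi> powr (-(a+2))"
    proof -
      have e1: "norm \<xi> powr (-(a+2)) = norm \<xi> powr (-a) * norm \<xi> powr (-2)"
        by (subst powr_add[symmetric]) simp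
      have e2: "norm \<xi> powr (-2) = 1 / (norm \<xi>)^2"
        using r by (simp add: powr_minus powr_numeral divide_inverse)
      show ?thesis using e1 e2 by simp
    qed
    show ?thesis
    proof (cases "M \<le> 1")
      case True
      have "norm \<xi> powr (-(a+2)) \<le> 1" using powr_mono2'[of "-(a+2)" 1 "norm \<xi>"] False a by simp
      moreover have "1 \<le> M powr (-a)" using powr_mono2'[of "-a" M 1] True Mpos a by simp
      ultimately show ?thesis using True mi eq by simp
    next
      case MF: False
      have "norm \<xi> powr (-(a+2)) \<le> M powr (-(a+2))" using a Mpos Mr by (intro powr_mono2') auto
      thus ?thesis using MF mi eq by simp
    qed
  qed
  ultimately show ?thesis unfolding p_def q_def by simp
qed



lemma Fker_meas_tau[measurable]: "(\<lambda>\<tau>. Fker t x \<tau> \<xi>) \<in> borel_measurable borel"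
  unfolding Fker_def by measurable

definition Iq :: ennreal where "Iq = (\<integral>\<^sup>+s. ennreal (1 / (1 + s^2)) \<partial>lborel)"

lemma Iq_fin: "Iq < \<infinity>"
proof -
  have "Iq \<le> (\<integral>\<^sup>+s. ennreal (gfun 0 2 s) \<partial>lborel)"
    unfolding Iq_def
  proof (intro nn_integral_mono ennreal_leI)
    fix s :: real
    show "1 / (1 + s^2) \<le> gfun 0 2 s"
    proof (cases "\<bar>s\<bar> \<le> 1")
      case True
      have "1 / (1 + s^2) \<le> 1" by (simp add: divide_le_eq_1 add_pos_nonneg)
      thus ?thesis using True unfolding gfun_def by simp
    next
      case False
      hence s: "s \<noteq> 0" by auto
      have "gfun 0 2 s = 1 / s^2" unfolding gfun_def using False s
        by (simp add: powr_minus powr_numeral divide_inverse)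
      moreover have "1 / (1 + s^2) \<le> 1 / s^2" using s by (intro divide_left_mono) (auto intro!: mult_pos_pos add_pos_nonneg)
      ultimately show ?thesis by simp
    qed
  qed
  also have "\<dots> < \<infinity>" by (rule gfun_int) auto
  finally show ?thesis .
qed

definition Cst :: "real \<Rightarrow> real" where "Cst t = 5*t^4 + 4*(1+t)^2 + 2*(t^2+4)"

lemma Cst_nonneg: "t \<ge> 0 \<Longrightarrow> 0 \<le> Cst t" unfolding Cst_def by simp

lemma inner_bound:
  fixes \<xi> :: "real^'k"
  assumes t: "t \<ge> 0" and xi: "\<xi> \<noteq> 0"
  shows "(\<integral>\<^sup>+\<tau>. ennreal ((cmod (Fker t x \<tau> \<xi>))^2) \<partial>lborel) \<le> ennreal (Cst t * min 1 (1 / (norm \<xi>)^2)) * Iq"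
proof (cases "norm \<xi> \<le> 1")
  case True
  have mi: "min 1 (1 / (norm \<xi>)^2) = 1" using True xi by (simp add: power_le_one)
  have "AE \<tau> in lborel. ennreal ((cmod (Fker t x \<tau> \<xi>))^2) \<le> ennreal (Cst t) * ennreal (1 / (1 + \<tau>^2))"
    using AE_lborel_singleton[of "norm \<xi>"] AE_lborel_singleton[of "- norm \<xi>"]
  proof eventually_elim
    case (elim \<tau>)
    have "(cmod (Fker t x \<tau> \<xi>))^2 \<le> (5*t^4 + 4*(1+t)^2) / (1 + \<tau>^2)"
      using F_bound_b[OF t xi True] elim by auto
    also have "\<dots> \<le> Cst t * (1 / (1 + \<tau>^2))" unfolding Cst_def
      by (simp add: divide_right_mono add_pos_nonneg)
    finally have "ennreal ((cmod (Fker t x \<tau> \<xi>))^2) \<le> ennreal (Cst t * (1 / (1 + \<tau>^2)))" by (rule ennreal_leI)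
    also have "\<dots> = ennreal (Cst t) * ennreal (1 / (1 + \<tau>^2))"
      using Cst_nonneg[OF t] by (intro ennreal_mult) (auto simp: add_pos_nonneg)
    finally show ?case .
  qed
  hence "(\<integral>\<^sup>+\<tau>. ennreal ((cmod (Fker t x \<tau> \<xi>))^2) \<partial>lborel) \<le> (\<integral>\<^sup>+\<tau>. ennreal (Cst t) * ennreal (1 / (1 + \<tau>^2)) \<partial>lborel)"
    by (rule nn_integral_mono_AE)
  also have "\<dots> = ennreal (Cst t) * Iq" unfolding Iq_def by (rule nn_integral_cmult) auto
  finally show ?thesis using mi by simp
next
  case False
  define r where "r = norm \<xi>"
  have r: "r > 1" using False unfolding r_def by simp
  have mi: "min 1 (1 / r^2) = 1 / r^2" using r by (simp add: divide_le_eq one_le_power)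
  have "(\<integral>\<^sup>+\<tau>. ennreal ((cmod (Fker t x \<tau> \<xi>))^2) \<partial>lborel)
      \<le> (\<integral>\<^sup>+\<tau>. ennreal ((t^2+4) / r^2) * (ennreal (1 / (1 + (\<tau> + r)^2)) + ennreal (1 / (1 + (\<tau> - r)^2))) \<partial>lborel)"
  proof (intro nn_integral_mono)
    fix \<tau>
    have "(cmod (Fker t x \<tau> \<xi>))^2 \<le> (t^2+4) / r^2 * (1 / (1 + (\<tau> + r)^2) + 1 / (1 + (\<tau> - r)^2))"
      using F_bound_a[OF t xi] unfolding r_def .
    thus "ennreal ((cmod (Fker t x \<tau> \<xi>))^2) \<le> ennreal ((t^2+4) / r^2) * (ennreal (1 / (1 + (\<tau> + r)^2)) + ennreal (1 / (1 + (\<tau> - r)^2)))"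
      by (simp add: ennreal_mult[symmetric] ennreal_plus[symmetric] add_pos_nonneg del: ennreal_plus)
  qed
  also have "\<dots> = ennreal ((t^2+4) / r^2) * ((\<integral>\<^sup>+\<tau>. ennreal (1 / (1 + (\<tau> + r)^2)) \<partial>lborel) + (\<integral>\<^sup>+\<tau>. ennreal (1 / (1 + (\<tau> - r)^2)) \<partial>lborel))"
    by (subst nn_integral_cmult) (auto simp: nn_integral_add)
  also have "(\<integral>\<^sup>+\<tau>. ennreal (1 / (1 + (\<tau> + r)^2)) \<partial>lborel) = Iq"
    unfolding Iq_def using nn_integral_real_affine[of "\<lambda>s. ennreal (1 / (1 + s^2))" 1 r] by (simp add: add.commute)
  also have "(\<integral>\<^sup>+\<tau>. ennreal (1 / (1 + (\<tau> - r)^2)) \<partial>lborel) = Iq"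
    unfolding Iq_def using nn_integral_real_affine[of "\<lambda>s. ennreal (1 / (1 + s^2))" 1 "-r"] by simp
  also have "ennreal ((t^2+4) / r^2) * (Iq + Iq) = ennreal (2*(t^2+4) / r^2) * Iq"
  proof -
    have "ennreal (2*(t^2+4) / r^2) = ennreal 2 * ennreal ((t^2+4) / r^2)"
      by (subst ennreal_mult[symmetric]) auto
    thus ?thesis by (simp add: mult_2[symmetric] mult_ac)
  qed
  also have "\<dots> \<le> ennreal (Cst t * min 1 (1 / (norm \<xi>)^2)) * Iq"
  proof (intro mult_right_mono ennreal_leI)
    have "2*(t^2+4) \<le> Cst t" unfolding Cst_def by simp
    hence "2*(t^2+4) / r^2 \<le> Cst t / r^2" by (rule divide_right_mono) simp
    thus "2*(t^2+4) / r^2 \<le> Cst t * min 1 (1 / (norm \<xi>)^2)"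
      using mi unfolding r_def by simp
  qed simp
  finally show ?thesis .
qed



lemma Gker_norm_sq:
  "(cmod (Gker \<beta> t x \<tau> \<xi>))^2 = (cmod (Fker t x \<tau> \<xi>))^2 * norm \<xi> powr (-(real CARD('k) - \<beta>))"
  for \<xi> :: "real^'k"
proof -
  have "(norm \<xi> powr (- (real CARD('k) - \<beta>) / 2))^2 = norm \<xi> powr (-(real CARD('k) - \<beta>))"
    by (simp add: power2_eq_square powr_add[symmetric])
  thus ?thesis unfolding Gker_def by (simp add: norm_mult power_mult_distrib)
qed

lemma G_int:
  fixes x :: "real^'k"
  assumes t: "t \<ge> 0" and b: "0 < \<beta>" "\<beta> < 2" "\<beta> \<le> real CARD('k)"
  shows "(\<integral>\<^sup>+p. ennreal ((cmod (Gker \<beta> t x (fst p) (snd p)))^2) \<partial>(lborel :: (real \<times> (real^'k)) measure)) < \<infinity>"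
proof -
  define a where "a = real CARD('k) - \<beta>"
  have a: "a \<ge> 0" unfolding a_def using b by simp
  define n where "n = real DIM(real^'k)"
  have n: "n = real CARD('k)" unfolding n_def by simp
  have npos: "n > 0" unfolding n by simp
  define g where "g = (\<lambda>s. gfun (a/n) ((a+2)/n) s)"
  have psf: "pair_sigma_finite (lborel :: real measure) (lborel :: (real^'k) measure)"
    by (simp add: pair_sigma_finite_def lborel.sigma_finite_measure_axioms)
  have meas: "(\<lambda>p. ennreal ((cmod (Gker \<beta> t x (fst p) (snd p)))^2)) \<in> borel_measurable (lborel \<Otimes>\<^sub>M (lborel :: (real^'k) measure))"
  proof -
    have "(\<lambda>p::real \<times> (real^'k). Gker \<beta> t x (fst p) (snd p)) \<in> borel_measurable (borel \<Otimes>\<^sub>M borel)" by (rule Gker_meas2)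
    hence "(\<lambda>p::real \<times> (real^'k). Gker \<beta> t x (fst p) (snd p)) \<in> borel_measurable (lborel \<Otimes>\<^sub>M lborel)"
      by (simp add: measurable_def space_pair_measure sets_pair_measure)
    thus ?thesis by measurable
  qed
  have "(\<integral>\<^sup>+p. ennreal ((cmod (Gker \<beta> t x (fst p) (snd p)))^2) \<partial>(lborel :: (real \<times> (real^'k)) measure))
      = (\<integral>\<^sup>+p. ennreal ((cmod (Gker \<beta> t x (fst p) (snd p)))^2) \<partial>(lborel \<Otimes>\<^sub>M lborel))"
    by (simp add: lborel_prod)
  also have "\<dots> = (\<integral>\<^sup>+\<xi>. (\<integral>\<^sup>+\<tau>. ennreal ((cmod (Gker \<beta> t x \<tau> \<xi>))^2) \<partial>lborel) \<partial>lborel)"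
    using pair_sigma_finite.nn_integral_snd[OF psf meas] by simp
  also have "\<dots> \<le> (\<integral>\<^sup>+\<xi>. ennreal (Cst t) * Iq * ennreal (\<Prod>b\<in>Basis. g (\<xi> \<bullet> b)) \<partial>(lborel :: (real^'k) measure))"
  proof (rule nn_integral_mono_AE)
    show "AE \<xi> in (lborel :: (real^'k) measure). (\<integral>\<^sup>+\<tau>. ennreal ((cmod (Gker \<beta> t x \<tau> \<xi>))^2) \<partial>lborel)
        \<le> ennreal (Cst t) * Iq * ennreal (\<Prod>b\<in>Basis. g (\<xi> \<bullet> b))"
      using AE_coords_nonzero
    proof eventually_elim
      case (elim \<xi>)
      have xi: "\<xi> \<noteq> 0" using elim by (metis inner_zero_left nonempty_Basis ex_in_conv)
      define w where "w = norm \<xi> powr (-a)"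
      have w0: "w \<ge> 0" unfolding w_def by simp
      have "(\<integral>\<^sup>+\<tau>. ennreal ((cmod (Gker \<beta> t x \<tau> \<xi>))^2) \<partial>lborel)
          = (\<integral>\<^sup>+\<tau>. ennreal w * ennreal ((cmod (Fker t x \<tau> \<xi>))^2) \<partial>lborel)"
        unfolding Gker_norm_sq a_def[symmetric] w_def[symmetric] using w0
        by (intro nn_integral_cong) (simp add: ennreal_mult mult.commute)
      also have "\<dots> = ennreal w * (\<integral>\<^sup>+\<tau>. ennreal ((cmod (Fker t x \<tau> \<xi>))^2) \<partial>lborel)"
        by (rule nn_integral_cmult) simp
      also have "\<dots> \<le> ennreal w * (ennreal (Cst t * min 1 (1 / (norm \<xi>)^2)) * Iq)"
        by (intro mult_left_mono inner_bound t xi) simp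
      also have "\<dots> = ennreal (Cst t) * Iq * ennreal (w * min 1 (1 / (norm \<xi>)^2))"
        using w0 Cst_nonneg[OF t] by (simp add: ennreal_mult mult_ac)
      also have "\<dots> \<le> ennreal (Cst t) * Iq * ennreal (\<Prod>b\<in>Basis. g (\<xi> \<bullet> b))"
        unfolding w_def g_def n_def
        by (intro mult_left_mono ennreal_leI outer_bound elim a) simp
      finally show ?case .
    qed
  qed
  also have "\<dots> = ennreal (Cst t) * Iq * (\<integral>\<^sup>+\<xi>. ennreal (\<Prod>b\<in>Basis. g (\<xi> \<bullet> b)) \<partial>(lborel :: (real^'k) measure))"
    by (rule nn_integral_cmult) (simp add: g_def)
  also have "(\<integral>\<^sup>+\<xi>. ennreal (\<Prod>b\<in>Basis. g (\<xi> \<bullet> b)) \<partial>(lborel :: (real^'k) measure))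
      = (\<Prod>b\<in>(Basis :: (real^'k) set). (\<integral>\<^sup>+s. ennreal (g s) \<partial>lborel))"
  proof -
    have "(\<integral>\<^sup>+\<xi>. ennreal (\<Prod>b\<in>Basis. g (\<xi> \<bullet> b)) \<partial>(lborel :: (real^'k) measure))
       = (\<integral>\<^sup>+\<xi>. (\<Prod>b\<in>Basis. ennreal (g (\<xi> \<bullet> b))) \<partial>(lborel :: (real^'k) measure))"
      by (intro nn_integral_cong) (simp add: prod_ennreal g_def gfun_nonneg)
    also have "\<dots> = (\<Prod>b\<in>(Basis :: (real^'k) set). (\<integral>\<^sup>+s. ennreal (g s) \<partial>lborel))"
      by (rule nn_integral_lborel_prod) (auto simp: g_def)
    finally show ?thesis .
  qed
  also have "ennreal (Cst t) * Iq * (\<Prod>b\<in>(Basis :: (real^'k) set). (\<integral>\<^sup>+s. ennreal (g s) \<partial>lborel)) < \<infinity>"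
  proof -
    have gi: "(\<integral>\<^sup>+s. ennreal (g s) \<partial>lborel) < \<infinity>" unfolding g_def
    proof (rule gfun_int)
      show "0 \<le> a / n" using a npos by simp
      show "a / n < 1" using npos b unfolding a_def n by simp
      show "1 < (a + 2) / n" using npos b unfolding a_def n by simp
    qed
    have "(\<Prod>b\<in>(Basis :: (real^'k) set). (\<integral>\<^sup>+s. ennreal (g s) \<partial>lborel)) < \<infinity>"
      using gi by (simp add: power_less_top_ennreal)
    thus ?thesis using Iq_fin by (simp add: ennreal_mult_less_top less_top)
  qed
  finally show ?thesis .
qed



lemma sqint_zero: "sqint N (\<lambda>y. 0)" unfolding sqint_def by simp

lemma sqint_lin:
  assumes f: "sqint N f" and g: "sqint N g"
  shows "sqint N (\<lambda>x. a * f x + b * g x)"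
proof -
  have fm[measurable]: "f \<in> borel_measurable N" and gm[measurable]: "g \<in> borel_measurable N"
    using f g unfolding sqint_def by auto
  have fi: "integrable N (\<lambda>x. (f x)^2)" and gi: "integrable N (\<lambda>x. (g x)^2)"
    using f g unfolding sqint_def by auto
  have "integrable N (\<lambda>x. 2*a^2 * (f x)^2 + 2*b^2 * (g x)^2)"
    using fi gi by (intro Bochner_Integration.integrable_add Bochner_Integration.integrable_mult_right)
  moreover have "(\<lambda>x. (a * f x + b * g x)^2) \<in> borel_measurable N" by measurable
  moreover have "norm ((a * f x + b * g x)^2) \<le> norm (2*a^2 * (f x)^2 + 2*b^2 * (g x)^2)" for x
  proof -
    have "(a * f x + b * g x)^2 \<le> 2*a^2 * (f x)^2 + 2*b^2 * (g x)^2"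
    proof -
      have "0 \<le> (a * f x - b * g x)^2" by simp
      thus ?thesis by (simp add: power2_eq_square algebra_simps)
    qed
    thus ?thesis by simp
  qed
  hence "AE x in N. norm ((a * f x + b * g x)^2) \<le> norm (2*a^2 * (f x)^2 + 2*b^2 * (g x)^2)" by simp
  ultimately have "integrable N (\<lambda>x. (a * f x + b * g x)^2)"
    by (rule Bochner_Integration.integrable_bound)
  thus ?thesis unfolding sqint_def by simp
qed

lemma iso_zero_fun:
  assumes iso: "isonormal M N W"
  shows "AE \<omega> in M. W (\<lambda>y. 0) \<omega> = 0"
proof -
  have "AE \<omega> in M. W (\<lambda>x. 1 * 0 + 1 * 0) \<omega> = 1 * W (\<lambda>y. 0) \<omega> + 1 * W (\<lambda>y. 0) \<omega>"
    using iso sqint_zero unfolding isonormal_def by blast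
  thus ?thesis by eventually_elim simp
qed

lemma iso_lin_sum:
  fixes n :: nat
  assumes iso: "isonormal M N W" and f: "\<forall>j<n. sqint N (f j)"
  shows "sqint N (\<lambda>y. \<Sum>j<n. c j * f j y) \<and>
         (AE \<omega> in M. W (\<lambda>y. \<Sum>j<n. c j * f j y) \<omega> = (\<Sum>j<n. c j * W (f j) \<omega>))"
  using f
proof (induction n)
  case 0
  show ?case using iso_zero_fun[OF iso] sqint_zero by simp
next
  case (Suc n)
  hence IH: "sqint N (\<lambda>y. \<Sum>j<n. c j * f j y)"
    "AE \<omega> in M. W (\<lambda>y. \<Sum>j<n. c j * f j y) \<omega> = (\<Sum>j<n. c j * W (f j) \<omega>)" by auto
  have fn: "sqint N (f n)" using Suc.prems by auto
  have eq: "(\<lambda>y. \<Sum>j<Suc n. c j * f j y) = (\<lambda>y. 1 * (\<Sum>j<n. c j * f j y) + c n * f n y)" by simp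
  have "AE \<omega> in M. W (\<lambda>y. 1 * (\<Sum>j<n. c j * f j y) + c n * f n y) \<omega> = 1 * W (\<lambda>y. \<Sum>j<n. c j * f j y) \<omega> + c n * W (f n) \<omega>"
    using iso IH(1) fn unfolding isonormal_def by blast
  with IH(2) have "AE \<omega> in M. W (\<lambda>y. \<Sum>j<Suc n. c j * f j y) \<omega> = (\<Sum>j<Suc n. c j * W (f j) \<omega>)"
    unfolding eq by eventually_elim simp
  moreover have "sqint N (\<lambda>y. \<Sum>j<Suc n. c j * f j y)" unfolding eq by (rule sqint_lin[OF IH(1) fn])
  ultimately show ?case by simp
qed

lemma iso_zero:
  assumes iso: "isonormal M N W" and sq: "sqint N g" and z: "AE \<omega> in M. W g \<omega> = 0"
  shows "AE y in N. g y = 0"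
proof -
  interpret prob_space M using iso unfolding isonormal_def by simp
  have Wm[measurable]: "W g \<in> borel_measurable M" and ch: "\<And>u. char (distr M borel (W g)) u =
              complex_of_real (exp (- (u^2 * (\<integral>x. (g x)^2 \<partial>N)) / 2))"
    using iso sq unfolding isonormal_def by auto
  have "char (distr M borel (W g)) 1 = (CLINT \<omega>|M. iexp (1 * W g \<omega>))"
    unfolding char_def by (simp add: integral_distr)
  also have "\<dots> = (CLINT \<omega>|M. 1)"
    using z by (intro integral_cong_AE) auto
  also have "\<dots> = 1" by (simp add: prob_space)
  finally have "complex_of_real (exp (- (1^2 * (\<integral>x. (g x)^2 \<partial>N)) / 2)) = 1" using ch by simp
  hence "exp (- (\<integral>x. (g x)^2 \<partial>N) / 2) = 1" by (metis of_real_eq_1_iff power_one mult_1)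
  hence "(\<integral>x. (g x)^2 \<partial>N) = 0" by simp
  moreover have "integrable N (\<lambda>x. (g x)^2)" using sq unfolding sqint_def by simp
  ultimately have "AE x in N. (g x)^2 = 0" by (subst integral_nonneg_eq_0_iff_AE[symmetric]) auto
  thus ?thesis by simp
qed



lemma deriv_zero_on_ray:
  fixes f :: "real \<Rightarrow> complex"
  assumes z: "\<forall>s>Y. f s = 0" and d: "\<And>s. s > Y \<Longrightarrow> (f has_vector_derivative f' s) (at s)"
  shows "\<forall>s>Y. f' s = 0"
proof (intro allI impI)
  fix s assume s: "s > Y"
  have "((\<lambda>_. 0) has_vector_derivative 0) (at s)" by (rule has_vector_derivative_const)
  hence "(f has_vector_derivative 0) (at s)"
    by (rule has_vector_derivative_transform_within_open[where S="{Y<..}"]) (use s z in auto)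
  with d[OF s] show "f' s = 0" by (rule vector_derivative_unique_at)
qed

lemma expsum_deriv:
  fixes b :: "'a \<Rightarrow> complex" and lam :: "'a \<Rightarrow> real"
  shows "((\<lambda>s. \<Sum>j\<in>J. b j * cis (s * lam j)) has_vector_derivative
          (\<Sum>j\<in>J. b j * (\<i> * complex_of_real (lam j)) * cis (s * lam j))) (at s)"
proof -
  define H where "H = (\<lambda>z. \<Sum>j\<in>J. b j * exp (\<i> * complex_of_real (lam j) * z))"
  have "(H has_field_derivative (\<Sum>j\<in>J. b j * ((\<i> * complex_of_real (lam j)) * exp (\<i> * complex_of_real (lam j) * z)))) (at z)" for z
    unfolding H_def by (auto intro!: derivative_eq_intros sum.cong simp: mult_ac)
  hence "((\<lambda>s. H (complex_of_real s)) has_vector_derivative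
      (\<Sum>j\<in>J. b j * ((\<i> * complex_of_real (lam j)) * exp (\<i> * complex_of_real (lam j) * complex_of_real s)))) (at s)"
    by (rule has_vector_derivative_real_field)
  moreover have "\<And>s. cis (s * lam j) = exp (\<i> * complex_of_real (lam j) * complex_of_real s)" for j
    by (simp add: cis_conv_exp mult_ac)
  ultimately show ?thesis unfolding H_def by (simp add: mult_ac)
qed

lemma exp_indep:
  fixes b :: "'a \<Rightarrow> complex" and lam :: "'a \<Rightarrow> real"
  assumes "finite J" and "\<forall>s>Y. (\<Sum>j\<in>J. b j * cis (s * lam j)) = 0"
  shows "(\<Sum>j\<in>{j\<in>J. lam j = \<mu>}. b j) = 0"
  using assms
proof (induction "card (lam ` J)" arbitrary: J lam b Y \<mu> rule: less_induct)
  case less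
  note fin = less.prems(1) and z = less.prems(2)
  show ?case
  proof (cases "J = {}")
    case True thus ?thesis by simp
  next
    case False
    then obtain j0 where j0: "j0 \<in> J" by blast
    define \<nu> where "\<nu> = lam j0"
    define J' where "J' = {j\<in>J. lam j \<noteq> \<nu>}"
    define lam' where "lam' = (\<lambda>j. lam j - \<nu>)"
    define b' where "b' = (\<lambda>j. b j * (\<i> * complex_of_real (lam' j)))"
    have finJ': "finite J'" using fin unfolding J'_def by simp
    have z1: "\<forall>s>Y. (\<Sum>j\<in>J. b j * cis (s * lam' j)) = 0"
    proof (intro allI impI)
      fix s assume "s > Y"
      hence "(\<Sum>j\<in>J. b j * cis (s * lam j)) = 0" using z by simp
      hence "cis (-(s*\<nu>)) * (\<Sum>j\<in>J. b j * cis (s * lam j)) = 0" by simp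
      moreover have "cis (-(s*\<nu>)) * (\<Sum>j\<in>J. b j * cis (s * lam j)) = (\<Sum>j\<in>J. b j * cis (s * lam' j))"
        unfolding sum_distrib_left lam'_def
        by (intro sum.cong refl) (simp add: cis_mult right_diff_distrib mult_ac)
      ultimately show "(\<Sum>j\<in>J. b j * cis (s * lam' j)) = 0" by simp
    qed
    have z2: "\<forall>s>Y. (\<Sum>j\<in>J. b' j * cis (s * lam' j)) = 0"
      using deriv_zero_on_ray[OF z1 expsum_deriv] unfolding b'_def .
    have z3: "\<forall>s>Y. (\<Sum>j\<in>J'. b' j * cis (s * lam' j)) = 0"
    proof (intro allI impI)
      fix s assume "s > Y"
      have "(\<Sum>j\<in>J'. b' j * cis (s * lam' j)) = (\<Sum>j\<in>J. b' j * cis (s * lam' j))"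
        by (rule sum.mono_neutral_left) (auto simp: fin J'_def b'_def lam'_def)
      thus "(\<Sum>j\<in>J'. b' j * cis (s * lam' j)) = 0" using z2 \<open>s > Y\<close> by simp
    qed
    have card_lt: "card (lam' ` J') < card (lam ` J)"
    proof -
      have "lam' ` J' = (\<lambda>x. x - \<nu>) ` (lam ` J - {\<nu>})" unfolding J'_def lam'_def by auto
      hence "card (lam' ` J') = card (lam ` J - {\<nu>})" by (simp add: card_image inj_on_def)
      also have "\<dots> < card (lam ` J)" using fin j0 unfolding \<nu>_def
        by (intro psubset_card_mono) auto
      finally show ?thesis .
    qed
    have IH: "(\<Sum>j\<in>{j\<in>J'. lam' j = \<mu>'}. b' j) = 0" for \<mu>'
      using less.hyps[OF card_lt finJ' z3] .
    have other: "(\<Sum>j\<in>{j\<in>J. lam j = \<mu>}. b j) = 0" if "\<mu> \<noteq> \<nu>" for \<mu>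
    proof -
      have S: "{j\<in>J'. lam' j = \<mu> - \<nu>} = {j\<in>J. lam j = \<mu>}" unfolding J'_def lam'_def using that by auto
      have "(\<Sum>j\<in>{j\<in>J. lam j = \<mu>}. b' j) = 0" using IH[of "\<mu> - \<nu>"] unfolding S .
      moreover have "(\<Sum>j\<in>{j\<in>J. lam j = \<mu>}. b' j) = (\<i> * complex_of_real (\<mu> - \<nu>)) * (\<Sum>j\<in>{j\<in>J. lam j = \<mu>}. b j)"
        unfolding b'_def lam'_def sum_distrib_left by (intro sum.cong refl) (simp add: mult_ac)
      moreover have "\<i> * complex_of_real (\<mu> - \<nu>) \<noteq> 0" using that by simp
      ultimately show ?thesis by simp
    qed
    show ?thesis
    proof (cases "\<mu> = \<nu>")
      case False thus ?thesis using other by simp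
    next
      case True
      define s where "s = Y + 1"
      have "(\<Sum>j\<in>J. b j * cis (s * lam j)) = 0" using z unfolding s_def by simp
      moreover have "(\<Sum>j\<in>J. b j * cis (s * lam j)) = (\<Sum>m\<in>lam ` J. (\<Sum>j\<in>{j\<in>J. lam j = m}. b j * cis (s * lam j)))"
        by (rule sum.group[symmetric]) (use fin in auto)
      moreover have "(\<Sum>m\<in>lam ` J. (\<Sum>j\<in>{j\<in>J. lam j = m}. b j * cis (s * lam j)))
          = (\<Sum>m\<in>lam ` J. cis (s * m) * (\<Sum>j\<in>{j\<in>J. lam j = m}. b j))"
        by (intro sum.cong refl) (auto simp: sum_distrib_left mult_ac intro!: sum.cong)
      moreover have "(\<Sum>m\<in>lam ` J. cis (s * m) * (\<Sum>j\<in>{j\<in>J. lam j = m}. b j))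
          = cis (s * \<nu>) * (\<Sum>j\<in>{j\<in>J. lam j = \<nu>}. b j)"
      proof -
        have "(\<Sum>m\<in>lam ` J. cis (s * m) * (\<Sum>j\<in>{j\<in>J. lam j = m}. b j))
            = (\<Sum>m\<in>{\<nu>}. cis (s * m) * (\<Sum>j\<in>{j\<in>J. lam j = m}. b j))"
          by (rule sum.mono_neutral_right) (use fin j0 other in \<open>auto simp: \<nu>_def\<close>)
        thus ?thesis by simp
      qed
      ultimately have "cis (s * \<nu>) * (\<Sum>j\<in>{j\<in>J. lam j = \<nu>}. b j) = 0" by simp
      thus ?thesis using True by simp
    qed
  qed
qed



lemma exp_indep_const:
  fixes b :: "'a \<Rightarrow> complex" and lam :: "'a \<Rightarrow> real"
  assumes fin: "finite J" and z: "\<forall>s>Y. (\<Sum>j\<in>J. b j * cis (s * lam j)) + \<gamma> = 0" and mu: "\<mu> \<noteq> 0"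
  shows "(\<Sum>j\<in>{j\<in>J. lam j = \<mu>}. b j) = 0"
proof -
  define J' where "J' = insert None (Some ` J)"
  define b' where "b' = (\<lambda>x. case x of None \<Rightarrow> \<gamma> | Some j \<Rightarrow> b j)"
  define lam' where "lam' = (\<lambda>x. case x of None \<Rightarrow> 0 | Some j \<Rightarrow> lam j)"
  have finJ': "finite J'" unfolding J'_def using fin by simp
  have "\<forall>s>Y. (\<Sum>x\<in>J'. b' x * cis (s * lam' x)) = 0"
  proof (intro allI impI)
    fix s assume s: "s > Y"
    have "(\<Sum>x\<in>J'. b' x * cis (s * lam' x)) = \<gamma> + (\<Sum>x\<in>Some ` J. b' x * cis (s * lam' x))"
      unfolding J'_def using fin by (subst sum.insert) (auto simp: b'_def lam'_def)
    also have "(\<Sum>x\<in>Some ` J. b' x * cis (s * lam' x)) = (\<Sum>j\<in>J. b j * cis (s * lam j))"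
      by (subst sum.reindex) (auto simp: b'_def lam'_def)
    finally show "(\<Sum>x\<in>J'. b' x * cis (s * lam' x)) = 0" using z s by (simp add: add.commute)
  qed
  from exp_indep[OF finJ' this, of \<mu>]
  have "(\<Sum>x\<in>{x\<in>J'. lam' x = \<mu>}. b' x) = 0" .
  moreover have "{x\<in>J'. lam' x = \<mu>} = Some ` {j\<in>J. lam j = \<mu>}"
    unfolding J'_def lam'_def using mu by auto
  moreover have "(\<Sum>x\<in>Some ` {j\<in>J. lam j = \<mu>}. b' x) = (\<Sum>j\<in>{j\<in>J. lam j = \<mu>}. b j)"
    by (subst sum.reindex) (auto simp: b'_def)
  ultimately show ?thesis by simp
qed

lemma exp_indep_lin:
  fixes b :: "'a \<Rightarrow> complex" and lam :: "'a \<Rightarrow> real"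
  assumes fin: "finite J" and nz: "\<forall>j\<in>J. lam j \<noteq> 0"
    and z: "\<forall>s>Y. (\<Sum>j\<in>J. b j * cis (s * lam j)) + \<alpha> * complex_of_real s + \<gamma> = 0"
  shows "(\<Sum>j\<in>{j\<in>J. lam j = \<mu>}. b j) = 0"
proof (cases "\<mu> = 0")
  case True
  hence "{j\<in>J. lam j = \<mu>} = {}" using nz by auto
  thus ?thesis by (simp only: sum.empty)
next
  case False
  have dl: "((\<lambda>s. \<alpha> * complex_of_real s) has_vector_derivative \<alpha>) (at s)" for s
  proof -
    have "((\<lambda>z. \<alpha> * z) has_field_derivative \<alpha>) (at (complex_of_real s))"
      by (auto intro!: derivative_eq_intros)
    thus ?thesis by (rule has_vector_derivative_real_field)
  qed
  have d: "((\<lambda>s. (\<Sum>j\<in>J. b j * cis (s * lam j)) + \<alpha> * complex_of_real s + \<gamma>) has_vector_derivative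
        ((\<Sum>j\<in>J. b j * (\<i> * complex_of_real (lam j)) * cis (s * lam j)) + \<alpha> + 0)) (at s)" for s
    by (intro has_vector_derivative_add expsum_deriv dl has_vector_derivative_const)
  have "\<forall>s>Y. (\<Sum>j\<in>J. (b j * (\<i> * complex_of_real (lam j))) * cis (s * lam j)) + \<alpha> = 0"
    using deriv_zero_on_ray[OF z d] by simp
  from exp_indep_const[OF fin this False]
  have "(\<Sum>j\<in>{j\<in>J. lam j = \<mu>}. b j * (\<i> * complex_of_real (lam j))) = 0" .
  moreover have "(\<Sum>j\<in>{j\<in>J. lam j = \<mu>}. b j * (\<i> * complex_of_real (lam j))) = (\<i> * complex_of_real \<mu>) * (\<Sum>j\<in>{j\<in>J. lam j = \<mu>}. b j)"
    unfolding sum_distrib_left by (intro sum.cong refl) (simp add: mult_ac)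
  ultimately show ?thesis using False by simp
qed



lemma open_ae_zero:
  fixes H :: "'a::euclidean_space \<Rightarrow> 'b::real_normed_vector"
  assumes U: "open U" and c: "continuous_on U H" and ae: "AE q in lborel. q \<in> U \<longrightarrow> H q = 0"
  shows "\<forall>q\<in>U. H q = 0"
proof (rule ccontr)
  assume "\<not> (\<forall>q\<in>U. H q = 0)"
  then obtain q0 where q0: "q0 \<in> U" "H q0 \<noteq> 0" by blast
  define V where "V = H -` (-{0}) \<inter> U"
  have oV: "open V" unfolding V_def using c U by (simp add: continuous_on_open_vimage open_Compl)
  have ne: "V \<noteq> {}" using q0 unfolding V_def by auto
  from ae obtain N0 where N0: "{x \<in> space lborel. \<not> (x \<in> U \<longrightarrow> H x = 0)} \<subseteq> N0" "emeasure lborel N0 = 0" "N0 \<in> sets lborel"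
    by (rule AE_E)
  have "V \<subseteq> N0" using N0(1) unfolding V_def by auto
  moreover have "N0 \<in> null_sets lebesgue"
    using N0(2,3) by (auto intro: null_sets_completionI)
  hence "negligible N0" by (simp add: negligible_iff_null_sets)
  ultimately have "negligible V" by (rule negligible_subset[rotated])
  with open_not_negligible[OF oV ne] show False by simp
qed

lemma term_identity:
  fixes \<xi> :: "real^'k"
  assumes r: "norm \<xi> > 0" and a: "\<tau> + norm \<xi> \<noteq> 0" "\<tau> - norm \<xi> \<noteq> 0"
  shows "Fker t x \<tau> \<xi> * complex_of_real (2 * norm \<xi>) * complex_of_real ((\<tau> + norm \<xi>) * (\<tau> - norm \<xi>))
    = cis (-(\<xi> \<bullet> x)) * (- complex_of_real (2 * norm \<xi>)) * cis (\<tau> * (-t))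
      + (- (cis (-(\<xi> \<bullet> x)) * (cis (t * norm \<xi>) - cis (-(t * norm \<xi>))))) * complex_of_real \<tau>
      + cis (-(\<xi> \<bullet> x)) * complex_of_real (norm \<xi>) * (cis (t * norm \<xi>) + cis (-(t * norm \<xi>)))"
proof -
  define r where "r = norm \<xi>"
  have r0: "complex_of_real (2 * r) \<noteq> 0" using r unfolding r_def by simp
  have "Fker t x \<tau> \<xi> * complex_of_real (2 * r) = cis (- (\<xi> \<bullet> x) - \<tau> * t) * (phi t (\<tau> + r) - phi t (\<tau> - r))"
    unfolding Fker_eq r_def[symmetric] using r0 by simp
  hence "Fker t x \<tau> \<xi> * complex_of_real (2 * r) * complex_of_real ((\<tau> + r) * (\<tau> - r))
      = cis (- (\<xi> \<bullet> x) - \<tau> * t) * ((phi t (\<tau> + r) - phi t (\<tau> - r)) * complex_of_real ((\<tau> + r) * (\<tau> - r)))"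
    by (simp add: mult.assoc)
  also have "\<dots> = cis (- (\<xi> \<bullet> x) - \<tau> * t) * (- complex_of_real (2*r) - cis (t*\<tau>) * (complex_of_real \<tau> * (cis (t*r) - cis (-(t*r)))
        - complex_of_real r * (cis (t*r) + cis (-(t*r)))))"
    using B_identity[of \<tau> r t] a unfolding r_def by simp
  also have "\<dots> = cis (-(\<xi> \<bullet> x)) * (- complex_of_real (2 * r)) * cis (\<tau> * (-t))
      + (- (cis (-(\<xi> \<bullet> x)) * (cis (t * r) - cis (-(t * r))))) * complex_of_real \<tau>
      + cis (-(\<xi> \<bullet> x)) * complex_of_real r * (cis (t * r) + cis (-(t * r)))"
  proof -
    have e1: "cis (- (\<xi> \<bullet> x) - \<tau> * t) = cis (-(\<xi> \<bullet> x)) * cis (\<tau> * (-t))"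
      by (simp add: cis_mult)
    have e2: "cis (\<tau> * (-t)) * cis (t*\<tau>) = 1"
      by (simp add: cis_mult mult.commute)
    have alg: "\<And>A E C R2 T P R Q :: complex. E * C = 1 \<Longrightarrow>
        A * E * (- R2 - C * (T * P - R * Q)) = A * (- R2) * E + (- (A * P)) * T + A * R * Q"
    proof -
      fix A E C R2 T P R Q :: complex assume EC: "E * C = 1"
      have "A * E * (- R2 - C * (T * P - R * Q)) = - (A * E * R2) - A * (E * C) * (T * P - R * Q)"
        by (simp add: algebra_simps)
      also have "\<dots> = A * (- R2) * E + (- (A * P)) * T + A * R * Q" unfolding EC
        by (simp add: algebra_simps)
      finally show "A * E * (- R2 - C * (T * P - R * Q)) = A * (- R2) * E + (- (A * P)) * T + A * R * Q" .
    qed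
    show ?thesis unfolding e1 by (rule alg[OF e2])
  qed
  finally show ?thesis unfolding r_def .
qed



definition Uset :: "(real \<times> (real^'k)) set" where
  "Uset = {q. snd q \<noteq> 0 \<and> fst q \<noteq> norm (snd q) \<and> fst q \<noteq> - norm (snd q)}"

lemma Uset_open: "open Uset"
proof -
  have "Uset = {q. snd q \<noteq> 0} \<inter> {q. fst q \<noteq> norm (snd q)} \<inter> {q. fst q \<noteq> - norm (snd q)}"
    unfolding Uset_def by auto
  also have "open \<dots>"
    by (intro open_Int open_Collect_neq continuous_intros)
  finally show ?thesis .
qed

lemma H_cont:
  "continuous_on Uset (\<lambda>q. \<Sum>j<m. complex_of_real (c j) * Fker (t j) (x j) (fst q) (snd q))"
  unfolding Fker_def Uset_def
  by (intro continuous_intros) (auto simp flip: of_real_add of_real_diff)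



lemma sum_three:
  fixes c :: "nat \<Rightarrow> complex"
  shows "(\<Sum>j\<in>J. c j * (X j + Y j * \<tau> + Z j)) = (\<Sum>j\<in>J. c j * X j) + (\<Sum>j\<in>J. c j * Y j) * \<tau> + (\<Sum>j\<in>J. c j * Z j)"
proof -
  have "(\<Sum>j\<in>J. c j * (X j + Y j * \<tau> + Z j)) = (\<Sum>j\<in>J. c j * X j + (c j * Y j) * \<tau> + c j * Z j)"
    by (intro sum.cong refl) (simp add: algebra_simps)
  also have "\<dots> = (\<Sum>j\<in>J. c j * X j) + (\<Sum>j\<in>J. (c j * Y j) * \<tau>) + (\<Sum>j\<in>J. c j * Z j)"
    by (simp add: sum.distrib)
  also have "(\<Sum>j\<in>J. (c j * Y j) * \<tau>) = (\<Sum>j\<in>J. c j * Y j) * \<tau>" by (simp add: sum_distrib_right)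
  finally show ?thesis .
qed

lemma step6:
  fixes x :: "nat \<Rightarrow> real^'k" and t :: "nat \<Rightarrow> real" and c :: "nat \<Rightarrow> real"
  assumes tpos: "\<forall>j<m. t j > 0"
    and H: "\<forall>q\<in>Uset. (\<Sum>j<m. complex_of_real (c j) * Fker (t j) (x j) (fst q) (snd q)) = 0"
    and xi: "\<xi> \<noteq> 0"
  shows "(\<Sum>j\<in>{j. j < m \<and> t j = T}. complex_of_real (c j) * cis (-(\<xi> \<bullet> x j))) = 0"
proof -
  define r where "r = norm \<xi>"
  have r: "r > 0" using xi unfolding r_def by simp
  define b where "b = (\<lambda>j. complex_of_real (c j) * (cis (-(\<xi> \<bullet> x j)) * (- complex_of_real (2 * r))))"
  define lam where "lam = (\<lambda>j. - t j)"
  define \<alpha> where "\<alpha> = (\<Sum>j<m. complex_of_real (c j) * (- (cis (-(\<xi> \<bullet> x j)) * (cis (t j * r) - cis (-(t j * r))))))"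
  define \<gamma> where "\<gamma> = (\<Sum>j<m. complex_of_real (c j) * (cis (-(\<xi> \<bullet> x j)) * complex_of_real r * (cis (t j * r) + cis (-(t j * r)))))"
  have z: "\<forall>\<tau>>r. (\<Sum>j\<in>{..<m}. b j * cis (\<tau> * lam j)) + \<alpha> * complex_of_real \<tau> + \<gamma> = 0"
  proof (intro allI impI)
    fix \<tau> assume tau: "\<tau> > r"
    have nn: "0 \<le> norm \<xi>" by simp
    have a1: "\<tau> + norm \<xi> \<noteq> 0" using tau nn unfolding r_def by linarith
    have a2: "\<tau> - norm \<xi> \<noteq> 0" using tau nn unfolding r_def by linarith
    note a = a1 a2
    have "(\<tau>, \<xi>) \<in> Uset" unfolding Uset_def using tau r xi unfolding r_def by auto
    hence "(\<Sum>j<m. complex_of_real (c j) * Fker (t j) (x j) \<tau> \<xi>) = 0" using H by auto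
    hence "0 = (\<Sum>j<m. complex_of_real (c j) * Fker (t j) (x j) \<tau> \<xi>) * complex_of_real (2 * r) * complex_of_real ((\<tau> + r) * (\<tau> - r))"
      by simp
    also have "\<dots> = (\<Sum>j<m. complex_of_real (c j) * (Fker (t j) (x j) \<tau> \<xi> * complex_of_real (2 * r) * complex_of_real ((\<tau> + r) * (\<tau> - r))))"
      by (simp add: sum_distrib_right mult.assoc)
    also have "\<dots> = (\<Sum>j<m. complex_of_real (c j) *
         (cis (-(\<xi> \<bullet> x j)) * (- complex_of_real (2 * r)) * cis (\<tau> * (- t j))
      + (- (cis (-(\<xi> \<bullet> x j)) * (cis (t j * r) - cis (-(t j * r))))) * complex_of_real \<tau>
      + cis (-(\<xi> \<bullet> x j)) * complex_of_real r * (cis (t j * r) + cis (-(t j * r)))))"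
      unfolding r_def using term_identity[OF _ a] xi by simp
    also have "\<dots> = (\<Sum>j\<in>{..<m}. b j * cis (\<tau> * lam j)) + \<alpha> * complex_of_real \<tau> + \<gamma>"
      unfolding sum_three b_def lam_def \<alpha>_def \<gamma>_def by (simp add: mult.assoc)
    finally show "(\<Sum>j\<in>{..<m}. b j * cis (\<tau> * lam j)) + \<alpha> * complex_of_real \<tau> + \<gamma> = 0" by simp
  qed
  have nz: "\<forall>j\<in>{..<m}. lam j \<noteq> 0" using tpos unfolding lam_def by auto
  from exp_indep_lin[OF _ nz z, of "-T"]
  have "(\<Sum>j\<in>{j\<in>{..<m}. lam j = -T}. b j) = 0" by simp
  moreover have "{j\<in>{..<m}. lam j = -T} = {j. j < m \<and> t j = T}" unfolding lam_def by auto
  moreover have "(\<Sum>j\<in>{j. j < m \<and> t j = T}. b j) = (- complex_of_real (2 * r)) * (\<Sum>j\<in>{j. j < m \<and> t j = T}. complex_of_real (c j) * cis (-(\<xi> \<bullet> x j)))"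
    unfolding b_def sum_distrib_left by (intro sum.cong refl) (simp add: mult_ac)
  ultimately show ?thesis using r by simp
qed

lemma step7:
  fixes x :: "nat \<Rightarrow> real^'k" and t :: "nat \<Rightarrow> real" and c :: "nat \<Rightarrow> real"
  assumes S6: "\<And>\<xi> T. \<xi> \<noteq> 0 \<Longrightarrow> (\<Sum>j\<in>{j. j < m \<and> t j = T}. complex_of_real (c j) * cis (-(\<xi> \<bullet> x j))) = 0"
    and inj: "\<And>i j. i < m \<Longrightarrow> j < m \<Longrightarrow> i \<noteq> j \<Longrightarrow> t i = t j \<Longrightarrow> x i \<noteq> x j"
    and j1: "j1 < m"
  shows "c j1 = 0"
proof -
  define S where "S = {j. j < m \<and> t j = t j1}"
  have finS: "finite S" unfolding S_def by simp
  have j1S: "j1 \<in> S" unfolding S_def using j1 by simp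
  define Bad where "Bad = insert (0::real^'k) (\<Union>((\<lambda>(i,j). {v. (x i - x j) \<bullet> v = 0}) ` {(i,j). i \<in> S \<and> j \<in> S \<and> i \<noteq> j}))"
  have "negligible Bad"
  proof -
    have "finite {(i,j). i \<in> S \<and> j \<in> S \<and> i \<noteq> j}"
      by (rule finite_subset[of _ "S \<times> S"]) (use finS in auto)
    moreover have "negligible {v. (x i - x j) \<bullet> v = 0}" if "i \<in> S" "j \<in> S" "i \<noteq> j" for i j
      using inj[of i j] that unfolding S_def by (intro negligible_hyperplane) auto
    ultimately show ?thesis unfolding Bad_def
      by (simp only: negligible_insert) (intro negligible_Union; auto)
  qed
  hence "Bad \<noteq> UNIV" by auto
  then obtain v where v: "v \<notin> Bad" by blast
  have v0: "v \<noteq> 0" using v unfolding Bad_def by auto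
  have vsep: "v \<bullet> x j \<noteq> v \<bullet> x j1" if "j \<in> S" "j \<noteq> j1" for j
  proof
    assume "v \<bullet> x j = v \<bullet> x j1"
    hence "(x j - x j1) \<bullet> v = 0" by (simp add: inner_diff_left inner_diff_right inner_commute)
    hence "v \<in> Bad" unfolding Bad_def using that j1S by blast
    thus False using v by simp
  qed
  have z: "\<forall>s>0. (\<Sum>j\<in>S. complex_of_real (c j) * cis (s * (- (v \<bullet> x j)))) = 0"
  proof (intro allI impI)
    fix s :: real assume s: "s > 0"
    have "s *\<^sub>R v \<noteq> 0" using s v0 by simp
    from S6[OF this, of "t j1"]
    show "(\<Sum>j\<in>S. complex_of_real (c j) * cis (s * (- (v \<bullet> x j)))) = 0"
      unfolding S_def by (simp add: inner_commute)
  qed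
  from exp_indep[OF finS z, of "- (v \<bullet> x j1)"]
  have "(\<Sum>j\<in>{j\<in>S. - (v \<bullet> x j) = - (v \<bullet> x j1)}. complex_of_real (c j)) = 0" .
  moreover have "{j\<in>S. - (v \<bullet> x j) = - (v \<bullet> x j1)} = {j1}" using vsep j1S by auto
  ultimately show ?thesis by simp
qed



theorem lemma5p9:
  fixes M :: "'w measure"
    and W :: "((bool \<times> 'd::finite) \<times> (real \<times> (real^'k)) \<Rightarrow> real) \<Rightarrow> 'w \<Rightarrow> real"
    and j0 :: 'd and \<beta> :: real and m :: nat and p :: "nat \<Rightarrow> real \<times> (real^'k)"
  assumes "isonormal M (count_space UNIV \<Otimes>\<^sub>M (lborel :: (real \<times> (real^'k)) measure)) W"
    and "(CARD('k) = 1 \<and> \<beta> = 1) \<or> (1 < \<beta> \<and> \<beta> < min (real CARD('k)) 2)"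
    and "inj_on p {..<m}"
    and "\<forall>j<m. fst (p j) > 0"
  shows "\<forall>c :: nat \<Rightarrow> real.
           (AE \<omega> in M. (\<Sum>j<m. c j * vhat W j0 \<beta> (fst (p j)) (snd (p j)) \<omega>) = 0)
           \<longrightarrow> (\<forall>j<m. c j = 0)"
proof -
  note iso = assms(1)
  have bpos: "0 < \<beta>" "\<beta> < 2" "\<beta> \<le> real CARD('k)" using assms(2) by auto
  define N where "N = (count_space (UNIV :: (bool \<times> 'd) set) \<Otimes>\<^sub>M (lborel :: (real \<times> (real^'k)) measure))"
  define t where "t = (\<lambda>j. fst (p j))"
  define x where "x = (\<lambda>j. snd (p j))"
  define Gp where "Gp = (\<lambda>j (q :: real \<times> (real^'k)). Gker \<beta> (t j) (x j) (fst q) (snd q))"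
  define f where "f = (\<lambda>j. (\<lambda>((a, i), (\<tau>, \<xi>)). if i = j0 then
          (if a then Re (Gker \<beta> (t j) (x j) \<tau> \<xi>) else - Im (Gker \<beta> (t j) (x j) \<tau> \<xi>)) else 0)
          :: (bool \<times> 'd) \<times> (real \<times> (real^'k)) \<Rightarrow> real)"
  have vh: "vhat W j0 \<beta> (fst (p j)) (snd (p j)) = W (f j)" for j
    unfolding vhat_def f_def t_def x_def ..
  have f_alt: "f j = (\<lambda>y. if snd (fst y) = j0 then (if fst (fst y) then Re (Gp j (snd y)) else - Im (Gp j (snd y))) else 0)" for j
    unfolding f_def Gp_def by (simp add: fun_eq_iff split_beta)
  have Gpm[measurable]: "Gp j \<in> borel_measurable lborel" for j
    unfolding Gp_def using Gker_meas by (simp add: measurable_lborel1)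
  have sq: "sqint N (f j)" if j: "j < m" for j
  proof -
    have tj: "t j \<ge> 0" using assms(4) j unfolding t_def by (simp add: less_imp_le)
    have fm[measurable]: "f j \<in> borel_measurable N"
    proof -
      have fstm: "fst \<in> N \<rightarrow>\<^sub>M count_space UNIV" unfolding N_def by (rule measurable_fst)
      have sndm: "snd \<in> N \<rightarrow>\<^sub>M lborel" unfolding N_def by (rule measurable_snd)
      have p1: "Measurable.pred N (\<lambda>y. snd (fst y) = j0)"
        using measurable_compose[OF fstm, of "\<lambda>a. snd a = j0" "count_space UNIV"] by simp
      have p2: "Measurable.pred N (\<lambda>y. fst (fst y))"
        using measurable_compose[OF fstm, of "\<lambda>a. fst a" "count_space UNIV"] by simp
      have g1: "(\<lambda>y. Gp j (snd y)) \<in> borel_measurable N" by (rule measurable_compose[OF sndm Gpm])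
      have r1: "(\<lambda>y. Re (Gp j (snd y))) \<in> borel_measurable N" using g1 by measurable
      have r2: "(\<lambda>y. - Im (Gp j (snd y))) \<in> borel_measurable N" using g1 by measurable
      have s1: "{y \<in> space N. snd (fst y) = j0} \<in> sets N" using p1 by (simp add: Measurable.pred_def)
      have s2: "{y \<in> space N. fst (fst y)} \<in> sets N" using p2 by (simp add: Measurable.pred_def)
      show ?thesis unfolding f_alt
        by (intro measurable_If r1 r2 s1 s2 borel_measurable_const)
    qed
    have bnd: "norm ((f j y)^2) \<le> (cmod (Gp j (snd y)))^2" for y
    proof -
      have "\<bar>f j y\<bar> \<le> cmod (Gp j (snd y))"
        unfolding f_alt using abs_Re_le_cmod abs_Im_le_cmod by auto
      hence "(f j y)^2 \<le> (cmod (Gp j (snd y)))^2"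
        by (metis abs_ge_zero power2_abs power_mono)
      thus ?thesis by simp
    qed
    have "(\<integral>\<^sup>+y. ennreal (norm ((f j y)^2)) \<partial>N) \<le> (\<integral>\<^sup>+y. ennreal ((cmod (Gp j (snd y)))^2) \<partial>N)"
      by (intro nn_integral_mono ennreal_leI bnd)
    also have "\<dots> = (\<integral>\<^sup>+a. (\<integral>\<^sup>+q. ennreal ((cmod (Gp j q))^2) \<partial>lborel) \<partial>count_space (UNIV :: (bool \<times> 'd) set))"
    proof -
      have sndm: "snd \<in> N \<rightarrow>\<^sub>M lborel" unfolding N_def by (rule measurable_snd)
      have g1: "(\<lambda>y. Gp j (snd y)) \<in> borel_measurable N" by (rule measurable_compose[OF sndm Gpm])
      have "(\<lambda>y. ennreal ((cmod (Gp j (snd y)))^2)) \<in> borel_measurable N" using g1 by measurable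
      from lborel.nn_integral_fst[OF this[unfolded N_def]]
      show ?thesis unfolding N_def snd_conv by (rule sym)
    qed
    also have "\<dots> = (\<Sum>a\<in>(UNIV :: (bool \<times> 'd) set). (\<integral>\<^sup>+q. ennreal ((cmod (Gp j q))^2) \<partial>lborel))"
      by (rule nn_integral_count_space_finite) simp
    also have "\<dots> < \<infinity>"
    proof -
      have "(\<integral>\<^sup>+q. ennreal ((cmod (Gp j q))^2) \<partial>lborel) < \<infinity>"
        unfolding Gp_def using G_int[OF tj bpos] .
      thus ?thesis by (simp add: ennreal_mult_less_top of_nat_less_top)
    qed
    finally have "integrable N (\<lambda>y. (f j y)^2)"
      by (intro integrableI_bounded) auto
    thus ?thesis unfolding sqint_def by simp
  qed
  show ?thesis
  proof (rule allI, rule impI)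
    fix c :: "nat \<Rightarrow> real"
    assume H0: "AE \<omega> in M. (\<Sum>j<m. c j * vhat W j0 \<beta> (fst (p j)) (snd (p j)) \<omega>) = 0"
    define g where "g = (\<lambda>y. \<Sum>j<m. c j * f j y)"
    from iso_lin_sum[OF iso[folded N_def], of m f c] sq
    have L: "sqint N g" "AE \<omega> in M. W g \<omega> = (\<Sum>j<m. c j * W (f j) \<omega>)"
      unfolding g_def by auto
    have "AE \<omega> in M. W g \<omega> = 0" using L(2) H0 unfolding vh by eventually_elim simp
    from iso_zero[OF iso[folded N_def] L(1) this]
    have gz: "AE y in N. g y = 0" .
    have psf: "pair_sigma_finite (count_space (UNIV :: (bool \<times> 'd) set)) (lborel :: (real \<times> (real^'k)) measure)"
      by (simp add: pair_sigma_finite_def lborel.sigma_finite_measure_axioms sigma_finite_measure_count_space_finite)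
    from pair_sigma_finite.AE_pair[OF psf gz[unfolded N_def]]
    have "\<forall>a. AE q in lborel. g (a, q) = 0" by (simp add: AE_count_space)
    hence AT: "AE q in lborel. g ((True, j0), q) = 0" and AF: "AE q in lborel. g ((False, j0), q) = 0" by auto
    have AEG: "AE q in lborel. (\<Sum>j<m. complex_of_real (c j) * Gp j q) = 0"
      using AT AF
    proof eventually_elim
      case (elim q)
      have re: "Re (\<Sum>j<m. complex_of_real (c j) * Gp j q) = g ((True, j0), q)"
        unfolding g_def f_alt by (simp add: Re_sum)
      have im: "Im (\<Sum>j<m. complex_of_real (c j) * Gp j q) = - g ((False, j0), q)"
        unfolding g_def f_alt by (simp add: Im_sum sum_negf)
      show ?case using elim re im by (simp add: complex_eq_iff)
    qed
    define H where "H = (\<lambda>q::real \<times> (real^'k). \<Sum>j<m. complex_of_real (c j) * Fker (t j) (x j) (fst q) (snd q))"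
    have "AE q in lborel. q \<in> Uset \<longrightarrow> H q = 0"
      using AEG
    proof eventually_elim
      case (elim q)
      show ?case
      proof
        assume q: "q \<in> Uset"
        hence nz: "snd q \<noteq> 0" unfolding Uset_def by simp
        have "(\<Sum>j<m. complex_of_real (c j) * Gp j q) = H q * complex_of_real (norm (snd q) powr (- (real CARD('k) - \<beta>) / 2))"
          unfolding H_def Gp_def Gker_def sum_distrib_right by (simp add: mult_ac)
        moreover have "complex_of_real (norm (snd q) powr (- (real CARD('k) - \<beta>) / 2)) \<noteq> 0"
          using nz by simp
        ultimately show "H q = 0" using elim by simp
      qed
    qed
    from open_ae_zero[OF Uset_open _ this]
    have HU: "\<forall>q\<in>Uset. H q = 0" unfolding H_def using H_cont by blast
    have tpos: "\<forall>j<m. t j > 0" using assms(4) unfolding t_def by simp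
    have S6: "(\<Sum>j\<in>{j. j < m \<and> t j = T}. complex_of_real (c j) * cis (-(\<xi> \<bullet> x j))) = 0"
      if "\<xi> \<noteq> 0" for \<xi> :: "real^'k" and T
      using step6[OF tpos HU[unfolded H_def] that] .
    have inj: "x i \<noteq> x j" if "i < m" "j < m" "i \<noteq> j" "t i = t j" for i j
    proof
      assume "x i = x j"
      hence "p i = p j" using that(4) unfolding t_def x_def by (simp add: prod_eq_iff)
      thus False using assms(3) that(1-3) by (auto simp: inj_on_def)
    qed
    show "\<forall>j<m. c j = 0"
      using step7[where m=m and t=t and c=c and x=x, OF S6 inj] by blast
  qed
qed


end
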